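(* Let $S=\langle T,\Pi,C\rangle$ be a state space and let $(A_i,\psi_i)$, $1\le i\le k$, be abstractions of $S$ forming an additive abstraction system. Let $t,g\in T$ and let $\pi$ be a path from $t$ to $g$ in $S$ with $C(\pi)=\sum_{i=1}^k C^*_i(t_i,g_i)$. Then $\sum_{i=1}^k C^*_i(t_i,g_i)\ge C^*_j(t_j,g_j)+R^*_j(t_j,g_j)$ for all $j\in\{1,\dots,k\}$.
   Context: A state space is a weighted directed graph $S=\langle T,\Pi,C\rangle$ where $T$ is a finite set of states, $\Pi\subseteq T\times T$ is a set of directed edges, and $C:\Pi\to\mathbb{N}=\{0,1,2,\dots\}$. A path from $u$ to $v$ is a sequence of edges $\langle\pi^1,\dots,\pi^n\rangle$ with $\pi^j=(u^{j-1},u^j)\in\Pi$, $u^0=u$, $u^n=v$; its cost is $C(\pi)=\sum_j C(\pi^j)$. An abstract state space is $A_i=\langle T_i,\Pi_i,C_i,R_i\rangle$ with $T_i$ a set of abstract states, $\Pi_i\subseteq T_i\times T_i$, and edge weights $C_i,R_i:\Pi_i\to\mathbb{N}$ (primary and residual cost), extended additively to paths. An abstraction of $S$ is a pair $(A_i,\psi_i)$ with $\psi_i:T\to T_i$ such that (1) for every $(u,v)\in\Pi$, $(\psi_i(u),\psi_i(v))\in\Pi_i$, and (2) for every $\pi=(u,v)\in\Pi$, $C_i(\pi_i)+R_i(\pi_i)\le C(\pi)$ where $\pi_i=(\psi_i(u),\psi_i(v))$. The system is additive if for every $\pi\in\Pi$, $\sum_{i=1}^k C_i(\pi_i)\le C(\pi)$.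 Write $t_i=\psi_i(t)$. Define $C^*_i(x,y)=\min\{C_i(\rho):\rho\text{ a path from }x\text{ to }y\text{ in }A_i\}$; $P_i(x,y)$ is the set of paths $\rho$ from $x$ to $y$ in $A_i$ with $C_i(\rho)=C^*_i(x,y)$, and $R^*_i(x,y)=\min_{\rho\in P_i(x,y)}R_i(\rho)$. *)

theory Defs
  imports Main
begin

fun is_path :: "('a \<times> 'a) set \<Rightarrow> 'a \<Rightarrow> ('a \<times> 'a) list \<Rightarrow> 'a \<Rightarrow> bool" where
  "is_path E u [] v = (u = v)"
| "is_path E u (e # es) v = (fst e = u \<and> e \<in> E \<and> is_path E (snd e) es v)"

definition path_cost :: "('a \<times> 'a \<Rightarrow> nat) \<Rightarrow> ('a \<times> 'a) list \<Rightarrow> nat" where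
  "path_cost c es = sum_list (map c es)"

definition state_space :: "'s set \<Rightarrow> ('s \<times> 's) set \<Rightarrow> bool" where
  "state_space T Pi \<longleftrightarrow> finite T \<and> Pi \<subseteq> T \<times> T"

definition abstract_state_space :: "'a set \<Rightarrow> ('a \<times> 'a) set \<Rightarrow> bool" where
  "abstract_state_space Ta Pia \<longleftrightarrow> Pia \<subseteq> Ta \<times> Ta"

definition is_abstraction ::
  "'s set \<Rightarrow> ('s \<times> 's) set \<Rightarrow> ('s \<times> 's \<Rightarrow> nat) \<Rightarrow>
   'a set \<Rightarrow> ('a \<times> 'a) set \<Rightarrow> ('a \<times> 'a \<Rightarrow> nat) \<Rightarrow> ('a \<times> 'a \<Rightarrow> nat) \<Rightarrow> ('s \<Rightarrow> 'a) \<Rightarrow> bool" where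
  "is_abstraction T Pi C Ta Pia Ca Ra psi \<longleftrightarrow>
     abstract_state_space Ta Pia \<and> psi ` T \<subseteq> Ta \<and>
     (\<forall>(u, v) \<in> Pi. (psi u, psi v) \<in> Pia \<and> Ca (psi u, psi v) + Ra (psi u, psi v) \<le> C (u, v))"

definition additive ::
  "('s \<times> 's) set \<Rightarrow> ('s \<times> 's \<Rightarrow> nat) \<Rightarrow> nat \<Rightarrow> (nat \<Rightarrow> 'a \<times> 'a \<Rightarrow> nat) \<Rightarrow> (nat \<Rightarrow> 's \<Rightarrow> 'a) \<Rightarrow> bool" where
  "additive Pi C k Ca psi \<longleftrightarrow>
     (\<forall>(u, v) \<in> Pi. (\<Sum>i = 1..k. Ca i (psi i u, psi i v)) \<le> C (u, v))"

definition opt_cost :: "('a \<times> 'a) set \<Rightarrow> ('a \<times> 'a \<Rightarrow> nat) \<Rightarrow> 'a \<Rightarrow> 'a \<Rightarrow> nat" where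
  "opt_cost E c x y = Inf {path_cost c p | p. is_path E x p y}"

definition opt_paths :: "('a \<times> 'a) set \<Rightarrow> ('a \<times> 'a \<Rightarrow> nat) \<Rightarrow> 'a \<Rightarrow> 'a \<Rightarrow> ('a \<times> 'a) list set" where
  "opt_paths E c x y = {p. is_path E x p y \<and> path_cost c p = opt_cost E c x y}"

definition opt_residual ::
  "('a \<times> 'a) set \<Rightarrow> ('a \<times> 'a \<Rightarrow> nat) \<Rightarrow> ('a \<times> 'a \<Rightarrow> nat) \<Rightarrow> 'a \<Rightarrow> 'a \<Rightarrow> nat" where
  "opt_residual E c r x y = Inf (path_cost r ` opt_paths E c x y)"

end

theory Submission
  imports Defs
begin

definition pmap :: "('s \<Rightarrow> 'a) \<Rightarrow> ('s \<times> 's) list \<Rightarrow> ('a \<times> 'a) list" where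
  "pmap f p = map (\<lambda>e. (f (fst e), f (snd e))) p"

lemma pmap_path:
  assumes "is_path Pi u p v" "\<forall>(a,b)\<in>Pi. (f a, f b) \<in> E"
  shows "is_path E (f u) (pmap f p) (f v)"
  using assms by (induction p arbitrary: u) (auto simp: pmap_def)

lemma opt_cost_le:
  assumes "is_path E x q y"
  shows "opt_cost E c x y \<le> path_cost c q"
  unfolding opt_cost_def using assms by (intro cInf_lower) auto

lemma sum_cost_le:
  assumes "is_path Pi u p v" "additive Pi C k Ca psi"
  shows "(\<Sum>i = 1..k. path_cost (Ca i) (pmap (psi i) p)) \<le> path_cost C p"
  using assms(1)
proof (induction p arbitrary: u)
  case Nil then show ?case by (simp add: path_cost_def pmap_def)
next
  case (Cons e es)
  obtain a b where e: "e = (a,b)" by force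
  have "e \<in> Pi" using Cons by simp
  hence h: "(\<Sum>i = 1..k. Ca i (psi i a, psi i b)) \<le> C (a, b)"
    using assms(2) e unfolding additive_def by auto
  have "(\<Sum>i = 1..k. path_cost (Ca i) (pmap (psi i) (e#es)))
      = (\<Sum>i = 1..k. Ca i (psi i a, psi i b)) + (\<Sum>i = 1..k. path_cost (Ca i) (pmap (psi i) es))"
    by (simp add: path_cost_def pmap_def e sum.distrib)
  also have "\<dots> \<le> C (a,b) + path_cost C es" using h Cons by (intro add_mono) auto
  also have "\<dots> = path_cost C (e#es)" by (simp add: path_cost_def e)
  finally show ?case .
qed

lemma one_cost_le:
  assumes "is_path Pi u p v" "is_abstraction T Pi C Ta Pia Ca Ra psi"
  shows "path_cost Ca (pmap psi p) + path_cost Ra (pmap psi p) \<le> path_cost C p"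
  using assms(1)
proof (induction p arbitrary: u)
  case Nil then show ?case by (simp add: path_cost_def pmap_def)
next
  case (Cons e es)
  obtain a b where e: "e = (a,b)" by force
  have "e \<in> Pi" using Cons by simp
  hence h: "Ca (psi a, psi b) + Ra (psi a, psi b) \<le> C (a, b)"
    using assms(2) e unfolding is_abstraction_def by auto
  have IH: "path_cost Ca (pmap psi es) + path_cost Ra (pmap psi es) \<le> path_cost C es"
    using Cons by auto
  show ?case using h IH by (simp add: path_cost_def pmap_def e)
qed

lemma sum_eq_le:
  fixes f g :: "nat \<Rightarrow> nat"
  assumes "finite A" "\<forall>i\<in>A. f i \<le> g i" "sum g A \<le> sum f A" "j \<in> A"
  shows "g j \<le> f j"
proof (rule ccontr)
  assume "\<not> g j \<le> f j"
  hence "sum f A < sum g A" using assms by (intro sum_strict_mono_ex1) (auto intro!: bexI[of _ j])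
  thus False using assms by simp
qed

theorem lemma9:
  fixes T :: "'s set" and Pi :: "('s \<times> 's) set" and C :: "'s \<times> 's \<Rightarrow> nat"
    and k :: nat
    and Ta :: "nat \<Rightarrow> 'a set" and Pia :: "nat \<Rightarrow> ('a \<times> 'a) set"
    and Ca Ra :: "nat \<Rightarrow> 'a \<times> 'a \<Rightarrow> nat" and psi :: "nat \<Rightarrow> 's \<Rightarrow> 'a"
    and t g :: 's and p :: "('s \<times> 's) list" and j :: nat
  assumes "state_space T Pi"
    and "\<forall>i \<in> {1..k}. is_abstraction T Pi C (Ta i) (Pia i) (Ca i) (Ra i) (psi i)"
    and "additive Pi C k Ca psi"
    and "t \<in> T" and "g \<in> T"
    and "is_path Pi t p g"
    and "path_cost C p = (\<Sum>i = 1..k. opt_cost (Pia i) (Ca i) (psi i t) (psi i g))"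
    and "j \<in> {1..k}"
  shows "(\<Sum>i = 1..k. opt_cost (Pia i) (Ca i) (psi i t) (psi i g))
           \<ge> opt_cost (Pia j) (Ca j) (psi j t) (psi j g)
             + opt_residual (Pia j) (Ca j) (Ra j) (psi j t) (psi j g)"
proof -
  have paths: "is_path (Pia i) (psi i t) (pmap (psi i) p) (psi i g)" if "i \<in> {1..k}" for i
    using assms(2,6) that by (intro pmap_path) (auto simp: is_abstraction_def)
  have le: "\<forall>i\<in>{1..k}. opt_cost (Pia i) (Ca i) (psi i t) (psi i g) \<le> path_cost (Ca i) (pmap (psi i) p)"
    using paths by (blast intro: opt_cost_le)
  have "path_cost (Ca j) (pmap (psi j) p) \<le> opt_cost (Pia j) (Ca j) (psi j t) (psi j g)"
    using sum_eq_le[OF _ le _ assms(8)] sum_cost_le[OF assms(6,3)] assms(7) by simp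
  hence eq: "path_cost (Ca j) (pmap (psi j) p) = opt_cost (Pia j) (Ca j) (psi j t) (psi j g)"
    using le assms(8) by (simp add: le_antisym)
  hence "pmap (psi j) p \<in> opt_paths (Pia j) (Ca j) (psi j t) (psi j g)"
    using paths assms(8) by (simp add: opt_paths_def)
  hence r: "opt_residual (Pia j) (Ca j) (Ra j) (psi j t) (psi j g) \<le> path_cost (Ra j) (pmap (psi j) p)"
    unfolding opt_residual_def by (intro cInf_lower) auto
  have "path_cost (Ca j) (pmap (psi j) p) + path_cost (Ra j) (pmap (psi j) p) \<le> path_cost C p"
    using one_cost_le[OF assms(6)] assms(2,8) by blast
  thus ?thesis using r eq assms(7) by linarith
qed

end
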